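(* For any positive integer $D$ there are no points ${\bf p}_1,\dots,{\bf p}_6\in\mathbb R^D$ such that $|{\bf p}_i-{\bf p}_{i+1}|\le 1$ and $|{\bf p}_i-{\bf p}_{i+3}|>2$ for all $i$, indices taken modulo $6$. *)

theory Defs
  imports "HOL-Analysis.Analysis"
begin

end

theory Submission
  imports Defs
begin

lemma hex_ident:
  fixes a b c d e f :: "'a::real_inner"
  shows "2*((norm(a-b))^2+(norm(b-c))^2+(norm(c-d))^2+(norm(d-e))^2+(norm(e-f))^2+(norm(f-a))^2)
   - ((norm(a-d))^2+(norm(b-e))^2+(norm(c-f))^2)
   = (norm(a-b+c-d+e-f))^2 + (norm((a+d)-(b+e)))^2 + (norm((b+e)-(c+f)))^2 + (norm((c+f)-(a+d)))^2"
  unfolding power2_norm_eq_inner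
  by (simp add: inner_diff_left inner_diff_right inner_add_left inner_add_right inner_commute algebra_simps)

lemma hex_ineq:
  fixes a b c d e f :: "'a::real_inner"
  shows "(norm(a-d))^2+(norm(b-e))^2+(norm(c-f))^2 \<le>
    2*((norm(a-b))^2+(norm(b-c))^2+(norm(c-d))^2+(norm(d-e))^2+(norm(e-f))^2+(norm(f-a))^2)"
  using hex_ident[of a b c d e f] by (smt (verit) zero_le_power2)

theorem mainTheorem13:
  fixes p :: "nat \<Rightarrow> real ^ 'n"
  shows "\<not> ((\<forall>i<6. dist (p i) (p ((i + 1) mod 6)) \<le> 1) \<and>
             (\<forall>i<6. dist (p i) (p ((i + 3) mod 6)) > 2))"
proof
  assume H: "(\<forall>i<6. dist (p i) (p ((i + 1) mod 6)) \<le> 1) \<and>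
             (\<forall>i<6. dist (p i) (p ((i + 3) mod 6)) > 2)"
  have s: "(norm (p i - p ((i+1) mod 6)))^2 \<le> 1" if "i<6" for i
  proof -
    have "norm (p i - p ((i+1) mod 6)) \<le> 1" using H that by (simp add: dist_norm)
    thus ?thesis by (simp add: power_le_one)
  qed
  have o: "(norm (p i - p ((i+3) mod 6)))^2 > 4" if "i<3" for i
  proof -
    have "i < 6" using that by simp
    hence "norm (p i - p ((i+3) mod 6)) > 2" using H by (simp add: dist_norm del: mod_less)
    hence "2^2 < (norm (p i - p ((i+3) mod 6)))^2"
      by (intro power_strict_mono) auto
    thus ?thesis by simp
  qed
  have s0: "(norm (p 0 - p 1))^2 \<le> 1"
  proof -
    have e: "(0+1) mod 6 = (1::nat)" by simp
    show ?thesis using s[of 0] unfolding e by simp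
  qed
  have s1: "(norm (p 1 - p 2))^2 \<le> 1"
  proof -
    have e: "(1+1) mod 6 = (2::nat)" by simp
    show ?thesis using s[of 1] unfolding e by simp
  qed
  have s2: "(norm (p 2 - p 3))^2 \<le> 1"
  proof -
    have e: "(2+1) mod 6 = (3::nat)" by simp
    show ?thesis using s[of 2] unfolding e by simp
  qed
  have s3: "(norm (p 3 - p 4))^2 \<le> 1"
  proof -
    have e: "(3+1) mod 6 = (4::nat)" by simp
    show ?thesis using s[of 3] unfolding e by simp
  qed
  have s4: "(norm (p 4 - p 5))^2 \<le> 1"
  proof -
    have e: "(4+1) mod 6 = (5::nat)" by simp
    show ?thesis using s[of 4] unfolding e by simp
  qed
  have s5: "(norm (p 5 - p 0))^2 \<le> 1"
  proof -
    have e: "(5+1) mod 6 = (0::nat)" by simp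
    show ?thesis using s[of 5] unfolding e by simp
  qed
  have o0: "(norm (p 0 - p 3))^2 > 4"
  proof -
    have e: "(0+3) mod 6 = (3::nat)" by simp
    show ?thesis using o[of 0] unfolding e by simp
  qed
  have o1: "(norm (p 1 - p 4))^2 > 4"
  proof -
    have e: "(1+3) mod 6 = (4::nat)" by simp
    show ?thesis using o[of 1] unfolding e by simp
  qed
  have o2: "(norm (p 2 - p 5))^2 > 4"
  proof -
    have e: "(2+3) mod 6 = (5::nat)" by simp
    show ?thesis using o[of 2] unfolding e by simp
  qed
  show False using hex_ineq[where a="p 0" and b="p 1" and c="p 2" and d="p 3" and e="p 4" and f="p 5"] s0 s1 s2 s3 s4 s5 o0 o1 o2
    by (smt (verit))
qed

end
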